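(* Let $G$ be a finite simple graph of order $n$ with minimum degree $\delta$. If $\delta\geq 1$ and $\sigma_2(G)\geq \frac{n}{\delta}+\delta-1$, then $\pi_2(G)\geq n-\delta$. Furthermore, if $\pi_2(G)\geq n-\delta$, then $\sigma^*(G)\geq n$.
   Context: $\sigma_2(G)=\min\{d_G(u)+d_G(v): u\neq v,\ uv\notin E(G)\}$ and $\pi_2(G)=\min\{d_G(u)d_G(v): u\neq v,\ uv\notin E(G)\}$, both defined to be $+\infty$ if $G$ is complete. For an independent set $I$ of $G$, $\delta_G(I)=\min\{d_G(u):u\in I\}$, $w_G(I)=\sum_{u\in I}d_G(u)$; $I$ is large if $|I|\ge\delta_G(I)+1$. $\sigma^*(G)=\min\{w_G(I): I \text{ a large independent set of } G\}$, or $+\infty$ if there is no large independent set. *)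

theory Defs
  imports "HOL-Library.Extended_Real"
begin

definition simple_graph :: "'a set \<Rightarrow> ('a \<Rightarrow> 'a \<Rightarrow> bool) \<Rightarrow> bool" where
  "simple_graph V E \<longleftrightarrow> finite V \<and> (\<forall>u v. E u v \<longrightarrow> u \<in> V \<and> v \<in> V)
     \<and> (\<forall>u v. E u v \<longrightarrow> E v u) \<and> (\<forall>u. \<not> E u u)"

definition degree :: "'a set \<Rightarrow> ('a \<Rightarrow> 'a \<Rightarrow> bool) \<Rightarrow> 'a \<Rightarrow> nat" where
  "degree V E u = card {v \<in> V. E u v}"

definition min_degree :: "'a set \<Rightarrow> ('a \<Rightarrow> 'a \<Rightarrow> bool) \<Rightarrow> nat" where
  "min_degree V E = Min (degree V E ` V)"

text \<open>Infimum in ereal; the infimum of the empty set is \<infinity> (G complete).\<close>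
definition sigma2 :: "'a set \<Rightarrow> ('a \<Rightarrow> 'a \<Rightarrow> bool) \<Rightarrow> ereal" where
  "sigma2 V E = Inf {ereal (real (degree V E u + degree V E v)) | u v.
      u \<in> V \<and> v \<in> V \<and> u \<noteq> v \<and> \<not> E u v}"

definition pi2 :: "'a set \<Rightarrow> ('a \<Rightarrow> 'a \<Rightarrow> bool) \<Rightarrow> ereal" where
  "pi2 V E = Inf {ereal (real (degree V E u * degree V E v)) | u v.
      u \<in> V \<and> v \<in> V \<and> u \<noteq> v \<and> \<not> E u v}"

definition independent_set :: "'a set \<Rightarrow> ('a \<Rightarrow> 'a \<Rightarrow> bool) \<Rightarrow> 'a set \<Rightarrow> bool" where
  "independent_set V E I \<longleftrightarrow> I \<subseteq> V \<and> (\<forall>u\<in>I. \<forall>v\<in>I. \<not> E u v)"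

definition set_min_degree :: "'a set \<Rightarrow> ('a \<Rightarrow> 'a \<Rightarrow> bool) \<Rightarrow> 'a set \<Rightarrow> nat" where
  "set_min_degree V E I = Min (degree V E ` I)"

definition set_weight :: "'a set \<Rightarrow> ('a \<Rightarrow> 'a \<Rightarrow> bool) \<Rightarrow> 'a set \<Rightarrow> nat" where
  "set_weight V E I = (\<Sum>u\<in>I. degree V E u)"

text \<open>Large independent set (necessarily nonempty, so that \<delta>_G(I) is defined).\<close>
definition large_independent_set :: "'a set \<Rightarrow> ('a \<Rightarrow> 'a \<Rightarrow> bool) \<Rightarrow> 'a set \<Rightarrow> bool" where
  "large_independent_set V E I \<longleftrightarrow> independent_set V E I \<and> I \<noteq> {}
     \<and> card I \<ge> set_min_degree V E I + 1"

definition sigma_star :: "'a set \<Rightarrow> ('a \<Rightarrow> 'a \<Rightarrow> bool) \<Rightarrow> ereal" where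
  "sigma_star V E = Inf {ereal (real (set_weight V E I)) | I. large_independent_set V E I}"

end

theory Submission
  imports Defs
begin

lemma deg_ge_min:
  assumes "simple_graph V E" "u \<in> V"
  shows "min_degree V E \<le> degree V E u"
  using assms unfolding min_degree_def simple_graph_def by (intro Min_le) auto

lemma deg_le_card:
  assumes "simple_graph V E"
  shows "degree V E u \<le> card V"
  using assms unfolding degree_def simple_graph_def by (intro card_mono) auto

theorem proposition1p6:
  fixes V :: "'a set" and E :: "'a \<Rightarrow> 'a \<Rightarrow> bool"
  assumes "simple_graph V E" and "V \<noteq> {}"
    and "min_degree V E \<ge> 1"
  shows "(sigma2 V E \<ge> ereal (real (card V) / real (min_degree V E) + real (min_degree V E) - 1)
            \<longrightarrow> pi2 V E \<ge> ereal (real (card V) - real (min_degree V E)))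
       \<and> (pi2 V E \<ge> ereal (real (card V) - real (min_degree V E))
            \<longrightarrow> sigma_star V E \<ge> ereal (real (card V)))"
proof (intro conjI impI)
  define n where "n = card V"
  define d where "d = min_degree V E"
  have fin: "finite V" using assms(1) simple_graph_def by blast
  have dpos: "real d \<ge> 1" using assms(3) d_def by simp
  obtain w where "w \<in> V" using assms(2) by blast
  have dn: "d \<le> n" using deg_ge_min[OF assms(1) \<open>w \<in> V\<close>] deg_le_card[OF assms(1)] d_def n_def
    by (meson order_trans)
  {
    assume h: "sigma2 V E \<ge> ereal (real (card V) / real (min_degree V E) + real (min_degree V E) - 1)"
    show "pi2 V E \<ge> ereal (real (card V) - real (min_degree V E))"
      unfolding pi2_def
    proof (rule Inf_greatest, clarify)
      fix u v assume uv: "u \<in> V" "v \<in> V" "u \<noteq> v" "\<not> E u v"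
      have "sigma2 V E \<le> ereal (real (degree V E u + degree V E v))"
        unfolding sigma2_def by (rule Inf_lower) (use uv in blast)
      with h have "ereal (real (card V) / real (min_degree V E) + real (min_degree V E) - 1) \<le> ereal (real (degree V E u + degree V E v))"
        by (rule order_trans)
      then have s: "real n / real d + real d - 1 \<le> real (degree V E u) + real (degree V E v)"
        unfolding n_def d_def by simp
      have a: "real d \<le> real (degree V E u)" "real d \<le> real (degree V E v)"
        using deg_ge_min[OF assms(1)] uv d_def by auto
      have p: "(real (degree V E u) - real d) * (real (degree V E v) - real d) \<ge> 0"
        using a by simp
      have q: "real d * (real n / real d + real d - 1) \<le> real d * (real (degree V E u) + real (degree V E v))"
        using s dpos by (intro mult_left_mono) auto
      have r: "real d * (real n / real d) = real n" using dpos by simp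
      have "real n - real d \<le> real (degree V E u) * real (degree V E v)"
        using p q r by (simp add: algebra_simps)
      then show "ereal (real (card V) - real (min_degree V E)) \<le> ereal (real (degree V E u * degree V E v))"
        unfolding n_def d_def by simp
    qed
  }
  {
    assume h: "pi2 V E \<ge> ereal (real (card V) - real (min_degree V E))"
    show "sigma_star V E \<ge> ereal (real (card V))"
      unfolding sigma_star_def
    proof (rule Inf_greatest, clarify)
      fix I assume L: "large_independent_set V E I"
      have IV: "I \<subseteq> V" and ind: "\<forall>u\<in>I. \<forall>v\<in>I. \<not> E u v" and ne: "I \<noteq> {}"
        and cI: "card I \<ge> set_min_degree V E I + 1"
        using L unfolding large_independent_set_def independent_set_def by auto
      have finI: "finite I" using IV fin finite_subset by blast
      define k where "k = set_min_degree V E I"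
      have "k \<in> degree V E ` I" unfolding k_def set_min_degree_def using finI ne by (intro Min_in) auto
      then obtain u where u: "u \<in> I" "degree V E u = k" by auto
      have kd: "d \<le> k" using deg_ge_min[OF assms(1)] u IV d_def by auto
      have pv: "real n - real d \<le> real k * real (degree V E v)" if v: "v \<in> I - {u}" for v
      proof -
        have "pi2 V E \<le> ereal (real (degree V E u * degree V E v))"
          unfolding pi2_def by (rule Inf_lower) (use v u IV ind in blast)
        with h have "ereal (real (card V) - real (min_degree V E)) \<le> ereal (real (degree V E u * degree V E v))"
          by (rule order_trans)
        then show ?thesis unfolding n_def d_def using u by simp
      qed
      have cI2: "real (card (I - {u})) \<ge> real k" using cI u finI k_def by (simp add: card_Diff_singleton)
      have "real k * (\<Sum>v\<in>I - {u}. real (degree V E v)) = (\<Sum>v\<in>I - {u}. real k * real (degree V E v))"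
        by (simp add: sum_distrib_left)
      also have "\<dots> \<ge> (\<Sum>v\<in>I - {u}. real n - real d)" using pv by (intro sum_mono) auto
      finally have S1: "real k * (\<Sum>v\<in>I - {u}. real (degree V E v)) \<ge> real (card (I - {u})) * (real n - real d)"
        by simp
      have "real (card (I - {u})) * (real n - real d) \<ge> real k * (real n - real d)"
        using cI2 dn by (intro mult_right_mono) auto
      with S1 have S2: "real k * (\<Sum>v\<in>I - {u}. real (degree V E v)) \<ge> real k * (real n - real d)" by linarith
      have kpos: "real k > 0" using kd dpos by simp
      have S3: "(\<Sum>v\<in>I - {u}. real (degree V E v)) \<ge> real n - real d"
        using S2 kpos by (meson mult_le_cancel_left_pos)
      have "real (set_weight V E I) = real k + (\<Sum>v\<in>I - {u}. real (degree V E v))"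
        unfolding set_weight_def using finI u by (simp add: sum.remove)
      with S3 kd have "real n \<le> real (set_weight V E I)" by simp
      then show "ereal (real (card V)) \<le> ereal (real (set_weight V E I))" unfolding n_def by simp
    qed
  }
qed

end
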